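(* Let $G$ be a finite connected groupoid with $G_0=\{e_1,\dots,e_r\}$, $A=\bigoplus_{i=1}^r A_i$ a unital ring with $A_i:=A_{e_i}$ having identity $1_i$, and $\alpha=(A_g,\alpha_g)_{g\in G}$ a unital partial action of $G$ on $A$. Suppose that there exist $a\in C(A)$ and $k\in\{1,\dots,r\}$ with $t_k(a)=1_k$, and that for each $j\in\{1,\dots,r\}$ there exists $g_j\in G(e_k,e_j)$ with $1_{g_j}=1_j$. Then $A\subset A\star_\alpha G$ is a separable extension.
   Context: A groupoid $G$ is a small category in which every morphism is invertible; $G_0$ is its object set (objects identified with identity morphisms), $s,t$ source and target; $gh$ is defined iff $s(g)=t(h)$; $G(e,f)$ is the set of morphisms from $e$ to $f$; $G$ is connected if $G(e,f)\neq\emptyset$ for all $e,f\in G_0$. A unital partial action of $G$ on $A$ is a family $\alpha=(A_g,\alpha_g)_{g\in G}$ where $A_{t(g)}$ is a two-sided ideal of $A$, $A_g=A1_g$ is a two-sided ideal of $A_{t(g)}$ with $1_g$ a central idempotent of $A$, $\alpha_g:A_{g^{-1}}\to A_g$ a ring isomorphism, such that $\alpha_e=\mathrm{id}_{A_e}$ for $e\in G_0$, $\alpha_h^{-1}(A_{g^{-1}}\cap A_h)\subseteq A_{(gh)^{-1}}$ and $\alpha_g(\alpha_h(x))=\alpha_{gh}(x)$ for $x\in\alpha_h^{-1}(A_{g^{-1}}\cap A_h)$, whenever $s(g)=t(h)$. The partial skew groupoid ring $A\star_\alpha G=\bigoplus_{g\in G}A_g\delta_g$ has multiplication $(a_g\delta_g)(b_h\delta_h)=\alpha_g(\alpha_{g^{-1}}(a_g)b_h)\delta_{gh}$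 if $s(g)=t(h)$ and $0$ otherwise; it is unital with $1=\sum_{e\in G_0}1_e\delta_e$, and $A$ is regarded as a subring via $a\mapsto\sum_{e\in G_0}(a1_e)\delta_e$. Trace maps: $t_{i,j}(a)=\sum_{g\in G(e_i,e_j)}\alpha_g(a1_{g^{-1}})$ and $t_j(a)=\sum_{i=1}^r t_{i,j}(a)$. $C(A)$ is the center of $A$. A ring extension $R\subseteq S$ is separable if the multiplication map $S\otimes_R S\to S$ splits as a map of $(S,S)$-bimodules; equivalently there exists $x\in S\otimes_R S$ with $m(x)=1_S$ and $sx=xs$ for all $s\in S$. *)

theory Defs
  imports Main
begin

text \<open>A groupoid is given by its set of morphisms G, its set of objects G0
(identified with identity morphisms, so G0 is a subset of G), source, target,
composition cmp g h (defined when src g = tgt h) and inverse.\<close>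

definition groupoid ::
  "'g set \<Rightarrow> 'g set \<Rightarrow> ('g \<Rightarrow> 'g) \<Rightarrow> ('g \<Rightarrow> 'g) \<Rightarrow> ('g \<Rightarrow> 'g \<Rightarrow> 'g) \<Rightarrow> ('g \<Rightarrow> 'g) \<Rightarrow> bool"
where
  "groupoid G G0 src tgt cmp ginv \<longleftrightarrow>
     G0 \<subseteq> G \<and>
     (\<forall>g\<in>G. src g \<in> G0 \<and> tgt g \<in> G0) \<and>
     (\<forall>e\<in>G0. src e = e \<and> tgt e = e) \<and>
     (\<forall>g\<in>G. \<forall>h\<in>G. src g = tgt h \<longrightarrow>
          cmp g h \<in> G \<and> src (cmp g h) = src h \<and> tgt (cmp g h) = tgt g) \<and>
     (\<forall>g\<in>G. \<forall>h\<in>G. \<forall>k\<in>G. src g = tgt h \<longrightarrow> src h = tgt k \<longrightarrow>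
          cmp (cmp g h) k = cmp g (cmp h k)) \<and>
     (\<forall>g\<in>G. cmp (tgt g) g = g \<and> cmp g (src g) = g) \<and>
     (\<forall>g\<in>G. ginv g \<in> G \<and> src (ginv g) = tgt g \<and> tgt (ginv g) = src g \<and>
          cmp g (ginv g) = tgt g \<and> cmp (ginv g) g = src g)"

definition hom_set :: "'g set \<Rightarrow> ('g \<Rightarrow> 'g) \<Rightarrow> ('g \<Rightarrow> 'g) \<Rightarrow> 'g \<Rightarrow> 'g \<Rightarrow> 'g set" where
  "hom_set G src tgt e f = {g \<in> G. src g = e \<and> tgt g = f}"

definition connected_groupoid ::
  "'g set \<Rightarrow> 'g set \<Rightarrow> ('g \<Rightarrow> 'g) \<Rightarrow> ('g \<Rightarrow> 'g) \<Rightarrow> bool" where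
  "connected_groupoid G G0 src tgt \<longleftrightarrow> (\<forall>e\<in>G0. \<forall>f\<in>G0. hom_set G src tgt e f \<noteq> {})"

definition ideal_of :: "('g \<Rightarrow> 'a::ring_1) \<Rightarrow> 'g \<Rightarrow> 'a set" where
  "ideal_of one g = {x * one g | x. True}"

definition central :: "'a::ring_1 \<Rightarrow> bool" where
  "central c \<longleftrightarrow> (\<forall>x. c * x = x * c)"

text \<open>Unital partial action (A_g, alpha_g) of the groupoid on the ring A (the type 'a),
with A_g = A 1_g; \<open>one g\<close> is 1_g.\<close>
definition unital_partial_action ::
  "'g set \<Rightarrow> 'g set \<Rightarrow> ('g \<Rightarrow> 'g) \<Rightarrow> ('g \<Rightarrow> 'g) \<Rightarrow> ('g \<Rightarrow> 'g \<Rightarrow> 'g) \<Rightarrow> ('g \<Rightarrow> 'g)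
   \<Rightarrow> ('g \<Rightarrow> 'a::ring_1) \<Rightarrow> ('g \<Rightarrow> 'a \<Rightarrow> 'a) \<Rightarrow> bool"
where
  "unital_partial_action G G0 src tgt cmp ginv one alpha \<longleftrightarrow>
     (\<forall>g\<in>G. central (one g) \<and> one g * one g = one g) \<and>
     \<comment> \<open>A_g is an ideal of A_{t(g)} (A_{t(g)} is an ideal of A since 1_{t(g)} is central)\<close>
     (\<forall>g\<in>G. ideal_of one g \<subseteq> ideal_of one (tgt g)) \<and>
     \<comment> \<open>alpha_g : A_{g^-1} -> A_g is a ring isomorphism\<close>
     (\<forall>g\<in>G. bij_betw (alpha g) (ideal_of one (ginv g)) (ideal_of one g) \<and>
        (\<forall>x\<in>ideal_of one (ginv g). \<forall>y\<in>ideal_of one (ginv g).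
            alpha g (x + y) = alpha g x + alpha g y \<and> alpha g (x * y) = alpha g x * alpha g y) \<and>
        alpha g (one (ginv g)) = one g) \<and>
     (\<forall>e\<in>G0. \<forall>x\<in>ideal_of one e. alpha e x = x) \<and>
     (\<forall>g\<in>G. \<forall>h\<in>G. src g = tgt h \<longrightarrow>
        (\<forall>x\<in>ideal_of one (ginv h). alpha h x \<in> ideal_of one (ginv g) \<longrightarrow>
           x \<in> ideal_of one (ginv (cmp g h)) \<and> alpha g (alpha h x) = alpha (cmp g h) x))"

text \<open>A is the direct sum of the ideals A_e, e in G0.\<close>
definition direct_sum_decomp :: "'g set \<Rightarrow> ('g \<Rightarrow> 'a::ring_1) \<Rightarrow> bool" where
  "direct_sum_decomp G0 one \<longleftrightarrow>
     (\<Sum>e\<in>G0. one e) = 1 \<and> (\<forall>e\<in>G0. \<forall>f\<in>G0. e \<noteq> f \<longrightarrow> one e * one f = 0)"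

definition trace_ij ::
  "'g set \<Rightarrow> ('g \<Rightarrow> 'g) \<Rightarrow> ('g \<Rightarrow> 'g) \<Rightarrow> ('g \<Rightarrow> 'g) \<Rightarrow> ('g \<Rightarrow> 'a::ring_1) \<Rightarrow> ('g \<Rightarrow> 'a \<Rightarrow> 'a)
   \<Rightarrow> 'g \<Rightarrow> 'g \<Rightarrow> 'a \<Rightarrow> 'a" where
  "trace_ij G src tgt ginv one alpha ei ej a =
     (\<Sum>g\<in>hom_set G src tgt ei ej. alpha g (a * one (ginv g)))"

definition trace_j ::
  "'g set \<Rightarrow> 'g set \<Rightarrow> ('g \<Rightarrow> 'g) \<Rightarrow> ('g \<Rightarrow> 'g) \<Rightarrow> ('g \<Rightarrow> 'g) \<Rightarrow> ('g \<Rightarrow> 'a::ring_1) \<Rightarrow> ('g \<Rightarrow> 'a \<Rightarrow> 'a)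
   \<Rightarrow> 'g \<Rightarrow> 'a \<Rightarrow> 'a" where
  "trace_j G G0 src tgt ginv one alpha ej a =
     (\<Sum>ei\<in>G0. trace_ij G src tgt ginv one alpha ei ej a)"

text \<open>Elements of A \<star> G are represented as functions f with f g \<in> A_g for g \<in> G
and f g = 0 otherwise (f = sum of (f g) delta_g; G is finite).\<close>
definition skew_carrier :: "'g set \<Rightarrow> ('g \<Rightarrow> 'a::ring_1) \<Rightarrow> ('g \<Rightarrow> 'a) set" where
  "skew_carrier G one = {f. (\<forall>g\<in>G. f g \<in> ideal_of one g) \<and> (\<forall>g. g \<notin> G \<longrightarrow> f g = 0)}"

definition skew_add :: "('g \<Rightarrow> 'a::ring_1) \<Rightarrow> ('g \<Rightarrow> 'a) \<Rightarrow> ('g \<Rightarrow> 'a)" where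
  "skew_add f h = (\<lambda>g. f g + h g)"

definition skew_zero :: "'g \<Rightarrow> 'a::ring_1" where
  "skew_zero = (\<lambda>g. 0)"

definition skew_mult ::
  "'g set \<Rightarrow> ('g \<Rightarrow> 'g) \<Rightarrow> ('g \<Rightarrow> 'g) \<Rightarrow> ('g \<Rightarrow> 'g \<Rightarrow> 'g) \<Rightarrow> ('g \<Rightarrow> 'g) \<Rightarrow> ('g \<Rightarrow> 'a::ring_1 \<Rightarrow> 'a)
   \<Rightarrow> ('g \<Rightarrow> 'a) \<Rightarrow> ('g \<Rightarrow> 'a) \<Rightarrow> ('g \<Rightarrow> 'a)" where
  "skew_mult G src tgt cmp ginv alpha f h =
     (\<lambda>k. \<Sum>p\<in>{p \<in> G \<times> G. src (fst p) = tgt (snd p) \<and> cmp (fst p) (snd p) = k}.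
            alpha (fst p) (alpha (ginv (fst p)) (f (fst p)) * h (snd p)))"

definition skew_one :: "'g set \<Rightarrow> ('g \<Rightarrow> 'a::ring_1) \<Rightarrow> ('g \<Rightarrow> 'a)" where
  "skew_one G0 one = (\<lambda>g. if g \<in> G0 then one g else 0)"

text \<open>A regarded as a subring: a \<mapsto> sum over e in G0 of (a 1_e) delta_e.\<close>
definition skew_embed :: "'g set \<Rightarrow> ('g \<Rightarrow> 'a::ring_1) \<Rightarrow> 'a \<Rightarrow> ('g \<Rightarrow> 'a)" where
  "skew_embed G0 one a = (\<lambda>g. if g \<in> G0 then a * one g else 0)"

text \<open>The tensor product S \<otimes>_R S is the free abelian group on S \<times> S modulo the subgroup
generated by the biadditivity and R-balancedness relations. A formal sum is a
function S \<times> S \<Rightarrow> int (finitely supported); an element of S \<otimes>_R S is represented by a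
list of pairs [(x_1,y_1),...,(x_n,y_n)] standing for x_1 \<otimes> y_1 + ... + x_n \<otimes> y_n.\<close>

definition delta2 :: "'s \<times> 's \<Rightarrow> ('s \<times> 's \<Rightarrow> int)" where
  "delta2 p = (\<lambda>q. if q = p then 1 else 0)"

inductive_set tensor_rel ::
  "'s set \<Rightarrow> 's set \<Rightarrow> ('s \<Rightarrow> 's \<Rightarrow> 's) \<Rightarrow> ('s \<Rightarrow> 's \<Rightarrow> 's) \<Rightarrow> ('s \<times> 's \<Rightarrow> int) set"
  for S R add mul
where
  zero: "(\<lambda>_. 0) \<in> tensor_rel S R add mul"
| add_left: "x \<in> S \<Longrightarrow> x' \<in> S \<Longrightarrow> y \<in> S \<Longrightarrow>
     delta2 (add x x', y) - delta2 (x, y) - delta2 (x', y) \<in> tensor_rel S R add mul"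
| add_right: "x \<in> S \<Longrightarrow> y \<in> S \<Longrightarrow> y' \<in> S \<Longrightarrow>
     delta2 (x, add y y') - delta2 (x, y) - delta2 (x, y') \<in> tensor_rel S R add mul"
| balanced: "x \<in> S \<Longrightarrow> y \<in> S \<Longrightarrow> r \<in> R \<Longrightarrow>
     delta2 (mul x r, y) - delta2 (x, mul r y) \<in> tensor_rel S R add mul"
| diff: "u \<in> tensor_rel S R add mul \<Longrightarrow> v \<in> tensor_rel S R add mul \<Longrightarrow>
     u - v \<in> tensor_rel S R add mul"

definition formal_sum :: "('s \<times> 's) list \<Rightarrow> ('s \<times> 's \<Rightarrow> int)" where
  "formal_sum xs = (\<lambda>p. int (count_list xs p))"

definition tensor_eq ::
  "'s set \<Rightarrow> 's set \<Rightarrow> ('s \<Rightarrow> 's \<Rightarrow> 's) \<Rightarrow> ('s \<Rightarrow> 's \<Rightarrow> 's) \<Rightarrow> ('s \<times> 's) list \<Rightarrow> ('s \<times> 's) list \<Rightarrow> bool"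
where
  "tensor_eq S R add mul xs ys \<longleftrightarrow> formal_sum xs - formal_sum ys \<in> tensor_rel S R add mul"

definition tensor_mult_map ::
  "('s \<Rightarrow> 's \<Rightarrow> 's) \<Rightarrow> ('s \<Rightarrow> 's \<Rightarrow> 's) \<Rightarrow> 's \<Rightarrow> ('s \<times> 's) list \<Rightarrow> 's" where
  "tensor_mult_map add mul zero xs = foldr (\<lambda>p acc. add (mul (fst p) (snd p)) acc) xs zero"

definition separable_extension ::
  "'s set \<Rightarrow> ('s \<Rightarrow> 's \<Rightarrow> 's) \<Rightarrow> ('s \<Rightarrow> 's \<Rightarrow> 's) \<Rightarrow> 's \<Rightarrow> 's \<Rightarrow> 's set \<Rightarrow> bool" where
  "separable_extension S add mul zero one R \<longleftrightarrow>
     (\<exists>xs. set xs \<subseteq> S \<times> S \<and> tensor_mult_map add mul zero xs = one \<and>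
        (\<forall>s\<in>S. tensor_eq S R add mul
                  (map (\<lambda>p. (mul s (fst p), snd p)) xs)
                  (map (\<lambda>p. (fst p, mul (snd p) s)) xs)))"

end

theory Submission
  imports Defs "HOL-Library.Function_Algebras"
begin


locale PA =
  fixes G G0 :: "'g set"
    and src tgt ginv :: "'g \<Rightarrow> 'g"
    and cmp :: "'g \<Rightarrow> 'g \<Rightarrow> 'g"
    and one :: "'g \<Rightarrow> 'a::ring_1"
    and alpha :: "'g \<Rightarrow> 'a \<Rightarrow> 'a"
  assumes grp: "groupoid G G0 src tgt cmp ginv"
    and act: "unital_partial_action G G0 src tgt cmp ginv one alpha"
    and fin: "finite G"
begin

lemma G0sub: "G0 \<subseteq> G" using grp unfolding groupoid_def by blast
lemma src_in: "g \<in> G \<Longrightarrow> src g \<in> G0" using grp unfolding groupoid_def by blast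
lemma tgt_in: "g \<in> G \<Longrightarrow> tgt g \<in> G0" using grp unfolding groupoid_def by blast
lemma src_obj: "e \<in> G0 \<Longrightarrow> src e = e" using grp unfolding groupoid_def by blast
lemma tgt_obj: "e \<in> G0 \<Longrightarrow> tgt e = e" using grp unfolding groupoid_def by blast
lemma cmp_in: "g \<in> G \<Longrightarrow> h \<in> G \<Longrightarrow> src g = tgt h \<Longrightarrow> cmp g h \<in> G"
  using grp unfolding groupoid_def by blast
lemma src_cmp: "g \<in> G \<Longrightarrow> h \<in> G \<Longrightarrow> src g = tgt h \<Longrightarrow> src (cmp g h) = src h"
  using grp unfolding groupoid_def by blast
lemma tgt_cmp: "g \<in> G \<Longrightarrow> h \<in> G \<Longrightarrow> src g = tgt h \<Longrightarrow> tgt (cmp g h) = tgt g"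
  using grp unfolding groupoid_def by blast
lemma assoc: "g \<in> G \<Longrightarrow> h \<in> G \<Longrightarrow> k \<in> G \<Longrightarrow> src g = tgt h \<Longrightarrow> src h = tgt k \<Longrightarrow>
   cmp (cmp g h) k = cmp g (cmp h k)"
  using grp unfolding groupoid_def by blast
lemma id_l: "g \<in> G \<Longrightarrow> cmp (tgt g) g = g" using grp unfolding groupoid_def by blast
lemma id_r: "g \<in> G \<Longrightarrow> cmp g (src g) = g" using grp unfolding groupoid_def by blast
lemma inv_in: "g \<in> G \<Longrightarrow> ginv g \<in> G" using grp unfolding groupoid_def by blast
lemma src_inv: "g \<in> G \<Longrightarrow> src (ginv g) = tgt g" using grp unfolding groupoid_def by blast
lemma tgt_inv: "g \<in> G \<Longrightarrow> tgt (ginv g) = src g" using grp unfolding groupoid_def by blast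
lemma inv_r: "g \<in> G \<Longrightarrow> cmp g (ginv g) = tgt g" using grp unfolding groupoid_def by blast
lemma inv_l: "g \<in> G \<Longrightarrow> cmp (ginv g) g = src g" using grp unfolding groupoid_def by blast

lemma obj_in: "e \<in> G0 \<Longrightarrow> e \<in> G" using G0sub by blast

lemma inv_unique:
  assumes u: "u \<in> G" and v: "v \<in> G" and st: "src u = tgt v" and c: "cmp u v = src v"
  shows "u = ginv v"
proof -
  have "u = cmp u (tgt v)" using id_r[OF u] st by simp
  also have "\<dots> = cmp u (cmp v (ginv v))" using inv_r[OF v] by simp
  also have "\<dots> = cmp (cmp u v) (ginv v)" using assoc[OF u v inv_in[OF v]] st tgt_inv[OF v] by simp
  also have "\<dots> = cmp (tgt (ginv v)) (ginv v)" using c tgt_inv[OF v] by simp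
  also have "\<dots> = ginv v" using id_l[OF inv_in[OF v]] .
  finally show ?thesis .
qed

lemma inv_inv: "g \<in> G \<Longrightarrow> ginv (ginv g) = g"
  by (metis inv_unique inv_in inv_r src_inv tgt_inv)

lemma inv_obj: "e \<in> G0 \<Longrightarrow> ginv e = e"
  by (metis obj_in id_l inv_unique src_obj tgt_obj)

lemma inv_cmp:
  assumes g: "g \<in> G" and h: "h \<in> G" and st: "src g = tgt h"
  shows "ginv (cmp g h) = cmp (ginv h) (ginv g)"
proof -
  have "cmp (cmp (ginv h) (ginv g)) (cmp g h) = cmp (ginv h) (cmp (ginv g) (cmp g h))"
    using assoc inv_in g h st cmp_in src_inv tgt_inv tgt_cmp by auto
  also have "\<dots> = cmp (ginv h) (cmp (cmp (ginv g) g) h)"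
    using assoc inv_in g h st src_inv by auto
  also have "\<dots> = src (cmp g h)" using inv_l g h st id_l src_cmp by auto
  finally show ?thesis
    by (metis assms cmp_in inv_in src_cmp src_inv tgt_cmp tgt_inv inv_unique)
qed

lemma cancel_l: "h \<in> G \<Longrightarrow> l \<in> G \<Longrightarrow> src h = tgt l \<Longrightarrow> cmp (ginv h) (cmp h l) = l"
  by (metis assoc id_l inv_in inv_l src_inv)

end



context PA begin

abbreviation I :: "'g \<Rightarrow> 'a set" where "I g \<equiv> ideal_of one g"

lemma one_central: "g \<in> G \<Longrightarrow> one g * x = x * one g"
  using act unfolding unital_partial_action_def central_def by blast
lemma one_idem: "g \<in> G \<Longrightarrow> one g * one g = one g"
  using act unfolding unital_partial_action_def by blast
lemma I_sub: "g \<in> G \<Longrightarrow> I g \<subseteq> I (tgt g)"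
  using act unfolding unital_partial_action_def by blast
lemma alpha_bij: "g \<in> G \<Longrightarrow> bij_betw (alpha g) (I (ginv g)) (I g)"
  using act unfolding unital_partial_action_def by blast
lemma alpha_add: "g \<in> G \<Longrightarrow> x \<in> I (ginv g) \<Longrightarrow> y \<in> I (ginv g) \<Longrightarrow> alpha g (x + y) = alpha g x + alpha g y"
  using act unfolding unital_partial_action_def by blast
lemma alpha_mult: "g \<in> G \<Longrightarrow> x \<in> I (ginv g) \<Longrightarrow> y \<in> I (ginv g) \<Longrightarrow> alpha g (x * y) = alpha g x * alpha g y"
  using act unfolding unital_partial_action_def by blast
lemma alpha_one: "g \<in> G \<Longrightarrow> alpha g (one (ginv g)) = one g"
  using act unfolding unital_partial_action_def by blast
lemma alpha_obj: "e \<in> G0 \<Longrightarrow> x \<in> I e \<Longrightarrow> alpha e x = x"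
  using act unfolding unital_partial_action_def by blast
lemma alpha_comp: "g \<in> G \<Longrightarrow> h \<in> G \<Longrightarrow> src g = tgt h \<Longrightarrow> x \<in> I (ginv h) \<Longrightarrow> alpha h x \<in> I (ginv g) \<Longrightarrow>
   x \<in> I (ginv (cmp g h)) \<and> alpha g (alpha h x) = alpha (cmp g h) x"
  using act unfolding unital_partial_action_def by blast

lemma memI: "g \<in> G \<Longrightarrow> x \<in> I g \<longleftrightarrow> x * one g = x"
proof
  assume g: "g \<in> G" and "x \<in> I g"
  then obtain y where "x = y * one g" unfolding ideal_of_def by blast
  then show "x * one g = x" using one_idem[OF g] by (simp add: mult.assoc)
next
  assume "x * one g = x" then show "x \<in> I g" unfolding ideal_of_def by (metis (mono_tags, lifting) mem_Collect_eq)
qed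

lemma oneI: "g \<in> G \<Longrightarrow> one g \<in> I g" using memI one_idem by blast
lemma I_multR: "g \<in> G \<Longrightarrow> x \<in> I g \<Longrightarrow> x * y \<in> I g"
proof -
  assume g: "g \<in> G" and x: "x \<in> I g"
  have "x * y * one g = x * one g * y" using one_central[OF g, of y] by (simp add: mult.assoc)
  then show ?thesis using memI[OF g] x by simp
qed
lemma I_multL: "g \<in> G \<Longrightarrow> x \<in> I g \<Longrightarrow> y * x \<in> I g"
proof -
  assume g: "g \<in> G" and x: "x \<in> I g"
  have "y * x * one g = y * (x * one g)" by (simp add: mult.assoc)
  then show ?thesis using memI[OF g] x by simp
qed
lemma I_one: "g \<in> G \<Longrightarrow> y * one g \<in> I g"
  using I_multL oneI by blast
lemma I_add: "g \<in> G \<Longrightarrow> x \<in> I g \<Longrightarrow> y \<in> I g \<Longrightarrow> x + y \<in> I g"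
  using memI by (simp add: distrib_right)
lemma I_zero: "g \<in> G \<Longrightarrow> 0 \<in> I g" using memI by simp
lemma I_sum:
  assumes g: "g \<in> G" and A: "finite A" and f: "\<And>i. i \<in> A \<Longrightarrow> f i \<in> I g"
  shows "sum f A \<in> I g"
  using A f by (induction A rule: finite_induct) (simp_all add: I_add I_zero g)

lemma alpha_in: "g \<in> G \<Longrightarrow> x \<in> I (ginv g) \<Longrightarrow> alpha g x \<in> I g"
  by (rule bij_betw_apply[OF alpha_bij])
lemma alpha_zero: "g \<in> G \<Longrightarrow> alpha g 0 = 0"
proof -
  assume g: "g \<in> G"
  have z: "(0::'a) \<in> I (ginv g)" using I_zero inv_in g by blast
  have "alpha g (0 + 0) = alpha g 0 + alpha g 0" using alpha_add[OF g z z] .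
  then show ?thesis by simp
qed
lemma alpha_sum:
  assumes g: "g \<in> G" and A: "finite A" and f: "\<And>i. i \<in> A \<Longrightarrow> f i \<in> I (ginv g)"
  shows "alpha g (sum f A) = (\<Sum>i\<in>A. alpha g (f i))"
  using A f
proof (induction A rule: finite_induct)
  case empty then show ?case using alpha_zero g by simp
next
  case (insert i A)
  have "sum f A \<in> I (ginv g)" using I_sum[OF inv_in[OF g] insert(1)] insert(4) by blast
  then show ?case using insert alpha_add[OF g] by simp
qed

lemma alpha_inv1: "g \<in> G \<Longrightarrow> x \<in> I g \<Longrightarrow> alpha g (alpha (ginv g) x) = x"
proof -
  assume g: "g \<in> G" and x: "x \<in> I g"
  have gi: "ginv g \<in> G" using inv_in g by blast
  have x': "x \<in> I (ginv (ginv g))" using x inv_inv g by simp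
  have ax: "alpha (ginv g) x \<in> I (ginv g)" using alpha_in[OF gi x'] .
  have "src g = tgt (ginv g)" using tgt_inv g by simp
  from alpha_comp[OF g gi this x'] ax
  have "alpha g (alpha (ginv g) x) = alpha (cmp g (ginv g)) x" by simp
  also have "\<dots> = x" using inv_r[OF g] alpha_obj[OF tgt_in[OF g]] I_sub[OF g] x by auto
  finally show ?thesis .
qed

lemma alpha_inv2: "g \<in> G \<Longrightarrow> x \<in> I (ginv g) \<Longrightarrow> alpha (ginv g) (alpha g x) = x"
  using alpha_inv1[of "ginv g" x] inv_in inv_inv by simp

lemma one_inv_in_src: "g \<in> G \<Longrightarrow> x \<in> I (ginv g) \<Longrightarrow> x \<in> I (src g)"
  using I_sub[of "ginv g"] inv_in tgt_inv by auto

end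



lemma sum_fun_apply: "(sum f A) x = (\<Sum>a\<in>A. f a x)"
  by (induction A rule: infinite_finite_induct) auto

context PA begin

lemma xprime:
  assumes h: "h \<in> G" and l: "l \<in> G" and st: "src h = tgt l"
  shows "alpha (ginv l) (one l * one (ginv h)) \<in> I (ginv (cmp h l))
     \<and> alpha (cmp h l) (alpha (ginv l) (one l * one (ginv h))) = alpha h (one l * one (ginv h))"
proof -
  let ?yz = "one l * one (ginv h)"
  have y0h: "?yz \<in> I (ginv h)" using I_multL oneI inv_in h by blast
  have y0l: "?yz \<in> I l" using I_multR oneI l by blast
  have x'1: "alpha (ginv l) ?yz \<in> I (ginv l)"
    using alpha_in[OF inv_in[OF l]] y0l inv_inv[OF l] by simp
  have x'2: "alpha l (alpha (ginv l) ?yz) = ?yz" using alpha_inv1[OF l y0l] .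
  from alpha_comp[OF h l st x'1] x'2 y0h show ?thesis by simp
qed

lemma e1:
  assumes h: "h \<in> G" and l: "l \<in> G" and st: "src h = tgt l"
  shows "alpha h (one l * one (ginv h)) = one h * one (cmp h l)"
proof -
  let ?yz = "one l * one (ginv h)"
  let ?e = "alpha h ?yz"
  let ?hl = "cmp h l"
  have hl: "?hl \<in> G" using cmp_in h l st by blast
  have y0h: "?yz \<in> I (ginv h)" using I_multL oneI inv_in h by blast
  have eh: "?e \<in> I h" using alpha_in[OF h y0h] .
  have ehl: "?e \<in> I ?hl" using xprime[OF h l st] alpha_in[OF hl, of "alpha (ginv l) ?yz"] by simp
  have ee1: "?e * one h = ?e" using memI[OF h] eh by blast
  have ee2: "?e * one ?hl = ?e" using memI[OF hl] ehl by blast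
  have ee: "?e = ?e * (one h * one ?hl)" using ee1 ee2 by (simp add: mult.assoc[symmetric])
  let ?y = "one ?hl * one h"
  have yh: "?y \<in> I h" using I_multL oneI h by blast
  have yhl: "?y \<in> I ?hl" using I_multR oneI hl by blast
  have hlinv: "ginv ?hl \<in> G" using inv_in hl by blast
  have z1: "alpha (ginv ?hl) ?y \<in> I (ginv ?hl)"
    using alpha_in[OF hlinv] yhl inv_inv[OF hl] by simp
  have z2: "alpha ?hl (alpha (ginv ?hl) ?y) = ?y" using alpha_inv1[OF hl yhl] .
  have st2: "src (ginv h) = tgt ?hl" using src_inv h tgt_cmp h l st by simp
  have z3: "?y \<in> I (ginv (ginv h))" using yh inv_inv h by simp
  from alpha_comp[OF inv_in[OF h] hl st2 z1] z2 z3
  have "alpha (ginv h) ?y = alpha (cmp (ginv h) ?hl) (alpha (ginv ?hl) ?y)" by simp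
  also have "\<dots> = alpha l (alpha (ginv ?hl) ?y)" using cancel_l h l st by simp
  finally have wdef: "alpha (ginv h) ?y = alpha l (alpha (ginv ?hl) ?y)" .
  have z1': "alpha (ginv ?hl) ?y \<in> I (ginv l)"
    using alpha_comp[OF inv_in[OF h] hl st2 z1] z2 z3 cancel_l h l st by simp
  have wl: "alpha (ginv h) ?y \<in> I l" using wdef alpha_in[OF l z1'] by simp
  have wh: "alpha (ginv h) ?y \<in> I (ginv h)" using alpha_in[OF inv_in[OF h] z3] .
  have wy0: "alpha (ginv h) ?y = alpha (ginv h) ?y * ?yz"
    using memI[OF l] wl memI[OF inv_in[OF h]] wh by (simp add: mult.assoc[symmetric])
  have "?y = alpha h (alpha (ginv h) ?y)" using alpha_inv1[OF h yh] by simp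
  also have "\<dots> = alpha h (alpha (ginv h) ?y * ?yz)" using wy0 by simp
  also have "\<dots> = alpha h (alpha (ginv h) ?y) * ?e" using alpha_mult[OF h wh y0h] by simp
  also have "\<dots> = ?y * ?e" using alpha_inv1[OF h yh] by simp
  finally have yye: "?y = ?y * ?e" .
  have c1: "one h * ?e = ?e * one h" using one_central[OF h] .
  have c2: "one ?hl * ?e = ?e * one ?hl" using one_central[OF hl] .
  have c3: "one ?hl * one h = one h * one ?hl" using one_central[OF hl] .
  have "?y * ?e = one ?hl * (?e * one h)" using c1 by (simp add: mult.assoc)
  also have "\<dots> = ?e * (one ?hl * one h)" using c2 by (simp add: mult.assoc[symmetric])
  also have "\<dots> = ?e" using c3 ee by simp
  finally have "?y = ?e" using yye by simp
  then show ?thesis using c3 by simp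
qed

lemma cov:
  assumes h: "h \<in> G" and l: "l \<in> G" and st: "src h = tgt l"
  shows "alpha h (alpha l (z * one (ginv l)) * one (ginv h)) = alpha (cmp h l) (z * one (ginv (cmp h l))) * one h"
proof -
  let ?hl = "cmp h l"
  let ?c = "ginv ?hl"
  have hl: "?hl \<in> G" using cmp_in h l st by blast
  have hi: "ginv h \<in> G" and li: "ginv l \<in> G" and ci: "?c \<in> G" using inv_in h l hl by auto
  let ?yz = "one l * one (ginv h)"
  let ?zl = "z * one (ginv l)"
  have zl: "?zl \<in> I (ginv l)" using I_one[OF li] .
  let ?u = "alpha l ?zl"
  have ul: "?u \<in> I l" using alpha_in[OF l zl] .
  let ?w = "?u * one (ginv h)"
  have wu: "?w = ?u * ?yz" using memI[OF l] ul by (simp add: mult.assoc[symmetric])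
  have wh: "?w \<in> I (ginv h)" using I_one[OF hi] .
  have wl: "?w \<in> I l" using I_multR[OF l ul] .
  let ?x = "alpha (ginv l) ?w"
  have xl: "?x \<in> I (ginv l)" using alpha_in[OF li] wl inv_inv[OF l] by simp
  have ax: "alpha l ?x = ?w" using alpha_inv1[OF l wl] .
  from alpha_comp[OF h l st xl] ax wh
  have step1: "alpha h ?w = alpha ?hl ?x" by simp
  let ?x' = "alpha (ginv l) ?yz"
  have yzl: "?yz \<in> I l" using I_multR oneI l by blast
  have ul': "?u \<in> I (ginv (ginv l))" using ul inv_inv[OF l] by simp
  have yzl': "?yz \<in> I (ginv (ginv l))" using yzl inv_inv[OF l] by simp
  have "?x = alpha (ginv l) ?u * ?x'" using wu alpha_mult[OF li ul' yzl'] by simp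
  also have "alpha (ginv l) ?u = ?zl" using alpha_inv2[OF l zl] .
  finally have x1: "?x = ?zl * ?x'" .
  have x'c: "?x' \<in> I ?c" using xprime[OF h l st] by blast
  have x'l: "?x' \<in> I (ginv l)" using alpha_in[OF li yzl'] .
  have "?zl * ?x' = z * (?x' * one (ginv l))" using one_central[OF li] by (simp add: mult.assoc)
  also have "\<dots> = z * ?x'" using memI[OF li] x'l by simp
  also have "\<dots> = z * (?x' * one ?c)" using memI[OF ci] x'c by simp
  also have "\<dots> = (z * one ?c) * ?x'" using one_central[OF ci] by (simp add: mult.assoc)
  finally have x2: "?x = (z * one ?c) * ?x'" using x1 by simp
  have zc: "z * one ?c \<in> I ?c" using I_one[OF ci] .
  have x'c': "?x' \<in> I (ginv ?hl)" using x'c .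
  have "alpha ?hl ?x = alpha ?hl (z * one ?c) * alpha ?hl ?x'"
    using x2 alpha_mult[OF hl zc x'c'] by simp
  also have "alpha ?hl ?x' = alpha h ?yz" using xprime[OF h l st] by blast
  also have "\<dots> = one h * one ?hl" using e1[OF h l st] .
  finally have x3: "alpha ?hl ?x = alpha ?hl (z * one ?c) * (one h * one ?hl)" .
  have Vhl: "alpha ?hl (z * one ?c) * one ?hl = alpha ?hl (z * one ?c)"
    using memI[OF hl] alpha_in[OF hl zc] by blast
  have "alpha ?hl (z * one ?c) * (one h * one ?hl) = alpha ?hl (z * one ?c) * (one ?hl * one h)"
    using one_central[OF hl] by simp
  also have "\<dots> = alpha ?hl (z * one ?c) * one h" using Vhl by (simp add: mult.assoc[symmetric])
  finally show ?thesis using step1 x3 by simp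
qed

lemma alpha_central:
  assumes g: "g \<in> G" and z: "z \<in> I (ginv g)" and zc: "\<And>y. z * y = y * z"
  shows "alpha g z * y = y * alpha g z"
proof -
  let ?v = "alpha g z"
  have v: "?v \<in> I g" using alpha_in[OF g z] .
  have yg: "y * one g \<in> I g" using I_one[OF g] .
  let ?q = "alpha (ginv g) (y * one g)"
  have q: "?q \<in> I (ginv g)" using alpha_in[OF inv_in[OF g]] yg inv_inv[OF g] by simp
  have qq: "alpha g ?q = y * one g" using alpha_inv1[OF g yg] .
  have "y * ?v = y * (one g * ?v)" using memI[OF g] v one_central[OF g] by metis
  also have "\<dots> = alpha g ?q * ?v" using qq by (simp add: mult.assoc)
  also have "\<dots> = alpha g (?q * z)" using alpha_mult[OF g q z] by simp
  also have "\<dots> = alpha g (z * ?q)" using zc by simp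
  also have "\<dots> = ?v * (y * one g)" using alpha_mult[OF g z q] qq by simp
  also have "\<dots> = ?v * one g * y" using one_central[OF g] by (simp add: mult.assoc)
  also have "\<dots> = ?v * y" using memI[OF g] v by simp
  finally show ?thesis by simp
qed

lemma trace_eq:
  "trace_j G G0 src tgt ginv one alpha j a = (\<Sum>l\<in>{l\<in>G. tgt l = j}. alpha l (a * one (ginv l)))"
proof -
  have f: "finite {l\<in>G. tgt l = j}" using fin by simp
  have fG0: "finite G0" using fin G0sub finite_subset by blast
  have "(\<Sum>l\<in>{l\<in>G. tgt l = j}. alpha l (a * one (ginv l))) =
     (\<Sum>e\<in>G0. \<Sum>l\<in>{x. x \<in> {l\<in>G. tgt l = j} \<and> src x = e}. alpha l (a * one (ginv l)))"
  proof -
    have "src ` {l\<in>G. tgt l = j} \<subseteq> G0" using src_in by auto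
    from sum.group[OF f fG0 this, of "\<lambda>l. alpha l (a * one (ginv l))"] show ?thesis by simp
  qed
  also have "\<dots> = trace_j G G0 src tgt ginv one alpha j a"
    unfolding trace_j_def trace_ij_def hom_set_def
    by (rule sum.cong) (auto intro!: sum.cong)
  finally show ?thesis by simp
qed

lemma trace_all:
  assumes k: "k \<in> G0" and tk: "trace_j G G0 src tgt ginv one alpha k a = one k"
    and gj: "gj \<in> G" and sk: "src gj = k" and og: "one gj = one (tgt gj)"
  shows "(\<Sum>l\<in>{l\<in>G. tgt l = tgt gj}. alpha l (a * one (ginv l))) = one (tgt gj)"
proof -
  let ?j = "tgt gj"
  let ?K = "{h\<in>G. tgt h = k}"
  let ?b = "\<lambda>l. alpha l (a * one (ginv l))"
  have gi: "ginv gj \<in> G" using inv_in gj by blast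
  have kG: "k \<in> G" using obj_in k by blast
  have jG: "?j \<in> G" using obj_in tgt_in gj by blast
  have oik: "one (ginv gj) \<in> I k" using I_sub[OF gi] oneI[OF gi] tgt_inv[OF gj] sk by auto
  have "one ?j = alpha gj (one (ginv gj))" using alpha_one[OF gj] og by simp
  also have "one (ginv gj) = one k * one (ginv gj)"
    using memI[OF kG] oik one_central[OF kG] by metis
  also have "one k = (\<Sum>h\<in>?K. ?b h)" using tk trace_eq by simp
  also have "(\<Sum>h\<in>?K. ?b h) * one (ginv gj) = (\<Sum>h\<in>?K. ?b h * one (ginv gj))"
    by (simp add: sum_distrib_right)
  also have "alpha gj \<dots> = (\<Sum>h\<in>?K. alpha gj (?b h * one (ginv gj)))"
    by (rule alpha_sum[OF gj]) (use fin I_one[OF gi] in auto)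
  also have "\<dots> = (\<Sum>h\<in>?K. ?b (cmp gj h))"
  proof (rule sum.cong)
    fix h assume hK: "h \<in> ?K"
    then have h: "h \<in> G" and th: "tgt h = k" by auto
    have st: "src gj = tgt h" using sk th by simp
    have ghG: "cmp gj h \<in> G" using cmp_in gj h st by blast
    have "alpha gj (?b h * one (ginv gj)) = ?b (cmp gj h) * one gj" using cov[OF gj h st] by simp
    also have "\<dots> = ?b (cmp gj h)"
    proof -
      have "?b (cmp gj h) \<in> I (cmp gj h)" using alpha_in[OF ghG] I_one[OF inv_in[OF ghG]] by blast
      then have "?b (cmp gj h) \<in> I ?j" using I_sub[OF ghG] tgt_cmp[OF gj h st] by auto
      then show ?thesis using og memI[OF jG] by simp
    qed
    finally show "alpha gj (?b h * one (ginv gj)) = ?b (cmp gj h)" .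
  qed simp
  also have "\<dots> = (\<Sum>l\<in>{l\<in>G. tgt l = ?j}. ?b l)"
  proof (rule sum.reindex_bij_witness[where i = "\<lambda>l. cmp (ginv gj) l" and j = "\<lambda>h. cmp gj h"])
    fix h assume "h \<in> ?K" then show "cmp (ginv gj) (cmp gj h) = h" using cancel_l gj sk by auto
  next
    fix h assume "h \<in> ?K" then show "cmp gj h \<in> {l\<in>G. tgt l = ?j}" using cmp_in tgt_cmp gj sk by auto
  next
    fix l assume l: "l \<in> {l\<in>G. tgt l = ?j}"
    then show "cmp gj (cmp (ginv gj) l) = l"
      using cancel_l[OF gi, of l] inv_inv[OF gj] src_inv[OF gj] by auto
  next
    fix l assume l: "l \<in> {l\<in>G. tgt l = ?j}"
    then show "cmp (ginv gj) l \<in> ?K" using cmp_in[OF gi] tgt_cmp[OF gi] src_inv[OF gj] tgt_inv[OF gj] sk by auto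
  qed simp
  finally show ?thesis by simp
qed

end



definition sing :: "'g \<Rightarrow> 'a::zero \<Rightarrow> 'g \<Rightarrow> 'a" where
  "sing g y = (\<lambda>l. if l = g then y else 0)"

lemma sing_zero[simp]: "sing g 0 = 0"
  unfolding sing_def by (rule ext) simp

lemma sum_single:
  assumes "finite A" "a \<in> A" "\<And>x. x \<in> A \<Longrightarrow> x \<noteq> a \<Longrightarrow> f x = 0"
  shows "sum f A = f a"
proof -
  have "sum f A = f a + sum f (A - {a})" by (rule sum.remove[OF assms(1,2)])
  also have "sum f (A - {a}) = 0" using assms(3) by (intro sum.neutral) auto
  finally show ?thesis by simp
qed

lemma skew_add_eq: "skew_add = (+)"
  unfolding skew_add_def by (intro ext) simp

lemma skew_zero_eq: "skew_zero = 0"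
  unfolding skew_zero_def by (intro ext) simp

context PA begin

abbreviation S where "S \<equiv> skew_carrier G one"
abbreviation mul where "mul \<equiv> skew_mult G src tgt cmp ginv alpha"
abbreviation emb where "emb \<equiv> skew_embed G0 one"

lemma S_zero: "0 \<in> S" unfolding skew_carrier_def using I_zero by auto
lemma S_add: "f \<in> S \<Longrightarrow> h \<in> S \<Longrightarrow> f + h \<in> S"
  unfolding skew_carrier_def using I_add by auto
lemma S_sing: "g \<in> G \<Longrightarrow> y \<in> I g \<Longrightarrow> sing g y \<in> S"
  unfolding skew_carrier_def sing_def using I_zero by auto
lemma S_val: "s \<in> S \<Longrightarrow> h \<in> G \<Longrightarrow> s h \<in> I h"
  unfolding skew_carrier_def by auto

lemma mul_formula:
  "mul f h = (\<Sum>p\<in>{p\<in>G \<times> G. src (fst p) = tgt (snd p)}.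
      sing (cmp (fst p) (snd p)) (alpha (fst p) (alpha (ginv (fst p)) (f (fst p)) * h (snd p))))"
proof (rule ext)
  fix k
  let ?P = "{p\<in>G \<times> G. src (fst p) = tgt (snd p)}"
  have fP: "finite ?P" using fin by (auto intro: finite_subset[of _ "G \<times> G"])
  have "(\<Sum>p\<in>?P. sing (cmp (fst p) (snd p)) (alpha (fst p) (alpha (ginv (fst p)) (f (fst p)) * h (snd p)))) k
     = (\<Sum>p\<in>?P. if cmp (fst p) (snd p) = k then alpha (fst p) (alpha (ginv (fst p)) (f (fst p)) * h (snd p)) else 0)"
    unfolding sum_fun_apply sing_def by (intro sum.cong) auto
  also have "\<dots> = (\<Sum>p\<in>{p\<in>?P. cmp (fst p) (snd p) = k}. alpha (fst p) (alpha (ginv (fst p)) (f (fst p)) * h (snd p)))"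
    by (simp only: sum.inter_filter[OF fP])
  also have "\<dots> = mul f h k"
    unfolding skew_mult_def by (intro sum.cong) auto
  finally show "mul f h k = (\<Sum>p\<in>?P. sing (cmp (fst p) (snd p)) (alpha (fst p) (alpha (ginv (fst p)) (f (fst p)) * h (snd p)))) k"
    by simp
qed

lemma mul_right_sing:
  assumes g: "g \<in> G"
  shows "mul f (sing g x) = (\<Sum>h\<in>{h\<in>G. src h = tgt g}.
           sing (cmp h g) (alpha h (alpha (ginv h) (f h) * x)))"
proof -
  let ?P = "{p\<in>G \<times> G. src (fst p) = tgt (snd p)}"
  let ?F = "\<lambda>p. sing (cmp (fst p) (snd p)) (alpha (fst p) (alpha (ginv (fst p)) (f (fst p)) * sing g x (snd p)))"
  have fP: "finite ?P" using fin by (auto intro: finite_subset[of _ "G \<times> G"])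
  have "mul f (sing g x) = (\<Sum>p\<in>?P. ?F p)" by (rule mul_formula)
  also have "\<dots> = (\<Sum>p\<in>?P. if snd p = g then ?F p else 0)"
    by (intro sum.cong) (auto simp: sing_def alpha_zero)
  also have "\<dots> = (\<Sum>p\<in>{p\<in>?P. snd p = g}. ?F p)"
    by (simp only: sum.inter_filter[OF fP])
  also have "\<dots> = (\<Sum>h\<in>{h\<in>G. src h = tgt g}. sing (cmp h g) (alpha h (alpha (ginv h) (f h) * x)))"
    by (rule sum.reindex_bij_witness[where i = "\<lambda>h. (h, g)" and j = fst]) (auto simp: g sing_def)
  finally show ?thesis .
qed

lemma mul_left_sing:
  assumes g: "g \<in> G"
  shows "mul (sing g x) f = (\<Sum>h\<in>{h\<in>G. tgt h = src g}.
           sing (cmp g h) (alpha g (alpha (ginv g) x * f h)))"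
proof -
  let ?P = "{p\<in>G \<times> G. src (fst p) = tgt (snd p)}"
  let ?F = "\<lambda>p. sing (cmp (fst p) (snd p)) (alpha (fst p) (alpha (ginv (fst p)) (sing g x (fst p)) * f (snd p)))"
  have fP: "finite ?P" using fin by (auto intro: finite_subset[of _ "G \<times> G"])
  have "mul (sing g x) f = (\<Sum>p\<in>?P. ?F p)" by (rule mul_formula)
  also have "\<dots> = (\<Sum>p\<in>?P. if fst p = g then ?F p else 0)"
    by (intro sum.cong) (auto simp: sing_def alpha_zero inv_in)
  also have "\<dots> = (\<Sum>p\<in>{p\<in>?P. fst p = g}. ?F p)"
    by (simp only: sum.inter_filter[OF fP])
  also have "\<dots> = (\<Sum>h\<in>{h\<in>G. tgt h = src g}. sing (cmp g h) (alpha g (alpha (ginv g) x * f h)))"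
    by (rule sum.reindex_bij_witness[where i = "\<lambda>h. (g, h)" and j = snd]) (auto simp: g sing_def)
  finally show ?thesis .
qed

lemma emb_sing:
  assumes l: "l \<in> G" and d: "d \<in> I l"
  shows "mul (emb d) (sing l (one l)) = sing l d"
proof -
  let ?e = "tgt l"
  have e: "?e \<in> G0" using tgt_in l by blast
  have eG: "?e \<in> G" using obj_in e by blast
  let ?f = "\<lambda>h. sing (cmp h l) (alpha h (alpha (ginv h) (emb d h) * one l))"
  have "mul (emb d) (sing l (one l)) = (\<Sum>h\<in>{h\<in>G. src h = ?e}. ?f h)" by (rule mul_right_sing[OF l])
  also have "\<dots> = ?f ?e"
  proof (rule sum_single)
    show "finite {h\<in>G. src h = ?e}" using fin by simp
    show "?e \<in> {h\<in>G. src h = ?e}" using eG src_obj e by simp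
    fix h assume "h \<in> {h\<in>G. src h = ?e}" "h \<noteq> ?e"
    then have "h \<notin> G0" using src_obj by auto
    then show "?f h = 0" using \<open>h \<in> _\<close> by (simp add: skew_embed_def alpha_zero inv_in)
  qed
  also have "\<dots> = sing l d"
  proof -
    have de: "d * one ?e \<in> I ?e" using I_one[OF eG] .
    have "emb d ?e = d * one ?e" using e by (simp add: skew_embed_def)
    moreover have "alpha (ginv ?e) (d * one ?e) = d * one ?e" using inv_obj[OF e] alpha_obj[OF e de] by simp
    moreover have "d * one ?e * one l \<in> I ?e" using I_multR[OF eG de] .
    moreover have "d * one ?e * one l = d"
    proof -
      have "d \<in> I ?e" using I_sub[OF l] d by auto
      then have "d * one ?e = d" using memI[OF eG] by simp
      then show ?thesis using memI[OF l] d by simp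
    qed
    ultimately show ?thesis using alpha_obj[OF e] id_l[OF l] by simp
  qed
  finally show ?thesis .
qed

lemma sing_emb:
  assumes g: "g \<in> G" and d: "d \<in> I (ginv g)"
  shows "mul (sing g x) (emb d) = sing g (alpha g (alpha (ginv g) x * d))"
proof -
  let ?e = "src g"
  have e: "?e \<in> G0" using src_in g by blast
  have eG: "?e \<in> G" using obj_in e by blast
  let ?f = "\<lambda>h. sing (cmp g h) (alpha g (alpha (ginv g) x * emb d h))"
  have "mul (sing g x) (emb d) = (\<Sum>h\<in>{h\<in>G. tgt h = ?e}. ?f h)" by (rule mul_left_sing[OF g])
  also have "\<dots> = ?f ?e"
  proof (rule sum_single)
    show "finite {h\<in>G. tgt h = ?e}" using fin by simp
    show "?e \<in> {h\<in>G. tgt h = ?e}" using eG tgt_obj e by simp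
    fix h assume "h \<in> {h\<in>G. tgt h = ?e}" "h \<noteq> ?e"
    then have "h \<notin> G0" using tgt_obj by auto
    then show "?f h = 0" by (simp add: skew_embed_def alpha_zero g)
  qed
  also have "\<dots> = sing g (alpha g (alpha (ginv g) x * d))"
  proof -
    have "d \<in> I ?e" using one_inv_in_src[OF g d] .
    then have "emb d ?e = d" using e memI[OF eG] by (simp add: skew_embed_def)
    then show ?thesis using id_r[OF g] by simp
  qed
  finally show ?thesis .
qed

end



section \<open>Tensor relation arithmetic\<close>

lemma T0: "0 \<in> tensor_rel S R add mul"
  using tensor_rel.zero[of S R add mul] by (simp add: zero_fun_def)

lemma Tneg: "u \<in> tensor_rel S R add mul \<Longrightarrow> - u \<in> tensor_rel S R add mul"
  using tensor_rel.diff[OF T0] by fastforce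

lemma Tadd: "u \<in> tensor_rel S R add mul \<Longrightarrow> v \<in> tensor_rel S R add mul \<Longrightarrow> u + v \<in> tensor_rel S R add mul"
  using tensor_rel.diff[of u S R add mul "- v"] Tneg[of v] by simp

lemma Tsum:
  assumes "finite A" "\<And>i. i \<in> A \<Longrightarrow> f i \<in> tensor_rel S R add mul"
  shows "sum f A \<in> tensor_rel S R add mul"
  using assms by (induction A rule: finite_induct) (auto intro: T0 Tadd)

lemma S_sum_gen:
  assumes S0: "0 \<in> S" and Sadd: "\<And>x y. x \<in> S \<Longrightarrow> y \<in> S \<Longrightarrow> x + y \<in> S"
    and A: "finite A" and x: "\<And>i. i \<in> A \<Longrightarrow> x i \<in> S"
  shows "sum x A \<in> S"
  using A x by (induction A rule: finite_induct) (auto intro: S0 Sadd)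

lemma grp_id: "(a::'x::ab_group_add) - b - c + (c - d) = a - (b + d)"
  by (simp add: algebra_simps)

lemma split_left:
  fixes S :: "'s::comm_monoid_add set"
  assumes S0: "0 \<in> S" and Sadd: "\<And>x y. x \<in> S \<Longrightarrow> y \<in> S \<Longrightarrow> x + y \<in> S"
    and A: "finite A" and x: "\<And>i. i \<in> A \<Longrightarrow> x i \<in> S" and y: "y \<in> S"
  shows "delta2 (sum x A, y) - (\<Sum>i\<in>A. delta2 (x i, y)) \<in> tensor_rel S R (+) mul"
  using A x
proof (induction A rule: finite_induct)
  case empty
  have "delta2 (0 + 0, y) - delta2 (0, y) - delta2 (0, y) \<in> tensor_rel S R (+) mul"
    by (rule tensor_rel.add_left[OF S0 S0 y])
  then have "- delta2 (0, y) \<in> tensor_rel S R (+) mul" by simp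
  from Tneg[OF this] show ?case by simp
next
  case (insert i A)
  have xi: "x i \<in> S" using insert by simp
  have sA: "sum x A \<in> S" using S_sum_gen[OF S0 Sadd insert(1)] insert(4) by simp
  have a: "delta2 (x i + sum x A, y) - delta2 (x i, y) - delta2 (sum x A, y) \<in> tensor_rel S R (+) mul"
    by (rule tensor_rel.add_left[OF xi sA y])
  have b: "delta2 (sum x A, y) - (\<Sum>i\<in>A. delta2 (x i, y)) \<in> tensor_rel S R (+) mul"
    using insert.IH insert.prems by blast
  from Tadd[OF a b] show ?case by (simp only: grp_id sum.insert[OF insert(1,2)])
qed

lemma split_right:
  fixes S :: "'s::comm_monoid_add set"
  assumes S0: "0 \<in> S" and Sadd: "\<And>x y. x \<in> S \<Longrightarrow> y \<in> S \<Longrightarrow> x + y \<in> S"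
    and A: "finite A" and x: "\<And>i. i \<in> A \<Longrightarrow> x i \<in> S" and y: "y \<in> S"
  shows "delta2 (y, sum x A) - (\<Sum>i\<in>A. delta2 (y, x i)) \<in> tensor_rel S R (+) mul"
  using A x
proof (induction A rule: finite_induct)
  case empty
  have "delta2 (y, 0 + 0) - delta2 (y, 0) - delta2 (y, 0) \<in> tensor_rel S R (+) mul"
    by (rule tensor_rel.add_right[OF y S0 S0])
  then have "- delta2 (y, 0) \<in> tensor_rel S R (+) mul" by simp
  from Tneg[OF this] show ?case by simp
next
  case (insert i A)
  have xi: "x i \<in> S" using insert by simp
  have sA: "sum x A \<in> S" using S_sum_gen[OF S0 Sadd insert(1)] insert(4) by simp
  have a: "delta2 (y, x i + sum x A) - delta2 (y, x i) - delta2 (y, sum x A) \<in> tensor_rel S R (+) mul"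
    by (rule tensor_rel.add_right[OF y xi sA])
  have b: "delta2 (y, sum x A) - (\<Sum>i\<in>A. delta2 (y, x i)) \<in> tensor_rel S R (+) mul"
    using insert.IH insert.prems by blast
  from Tadd[OF a b] show ?case by (simp only: grp_id sum.insert[OF insert(1,2)])
qed

lemma formal_sum_Cons: "formal_sum (p # xs) = delta2 p + formal_sum xs"
  by (rule ext) (simp add: formal_sum_def delta2_def)

lemma formal_sum_eq: "formal_sum xs = sum_list (map delta2 xs)"
proof (induction xs)
  case Nil then show ?case by (simp add: formal_sum_def zero_fun_def)
next
  case (Cons p xs) then show ?case by (simp add: formal_sum_Cons)
qed

lemma tensor_mult_map_eq: "tensor_mult_map skew_add m skew_zero xs = sum_list (map (\<lambda>p. m (fst p) (snd p)) xs)"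
  unfolding tensor_mult_map_def skew_add_eq skew_zero_eq by (induction xs) auto




lemma grp_id2: "(a::'x::ab_group_add) - b + (b - c) = a - c"
  by (simp add: algebra_simps)

lemma grp_id4: "(l::'x::ab_group_add) - a - (r - a) = l - r"
  by (simp add: algebra_simps)

context PA begin

lemma S_sum: "finite A \<Longrightarrow> (\<And>i. i \<in> A \<Longrightarrow> x i \<in> S) \<Longrightarrow> sum x A \<in> S"
  using S_sum_gen[OF S_zero S_add] by blast

lemma inv_cmp_cancel:
  assumes g: "g \<in> G" and h: "h \<in> G" and st: "src h = tgt g"
  shows "cmp (ginv (cmp h g)) h = ginv g"
proof -
  have "cmp (ginv (cmp h g)) h = cmp (cmp (ginv g) (ginv h)) h" using inv_cmp[OF h g st] by simp
  also have "\<dots> = cmp (ginv g) (cmp (ginv h) h)"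
    using assoc[OF inv_in[OF g] inv_in[OF h] h] src_inv[OF g] tgt_inv[OF h] src_inv[OF h] st by simp
  also have "\<dots> = cmp (ginv g) (src (ginv g))" using inv_l[OF h] st src_inv[OF g] by simp
  also have "\<dots> = ginv g" using id_r[OF inv_in[OF g]] .
  finally show ?thesis .
qed

lemma d_in:
  assumes g: "g \<in> G" and h: "h \<in> G" and t: "tgt h = tgt g" and q: "q \<in> I h"
  shows "alpha (ginv g) (one g * q) \<in> I (cmp (ginv g) h)"
proof -
  have gi: "ginv g \<in> G" using inv_in g by blast
  have st: "src (ginv g) = tgt h" using src_inv[OF g] t by simp
  have gqh: "one g * q \<in> I h" using I_multL[OF h q] .
  have gqg: "one g * q \<in> I (ginv (ginv g))" using I_multR[OF g oneI[OF g]] inv_inv[OF g] by simp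
  let ?x = "alpha (ginv h) (one g * q)"
  have x: "?x \<in> I (ginv h)" using alpha_in[OF inv_in[OF h]] gqh inv_inv[OF h] by simp
  have ax: "alpha h ?x = one g * q" using alpha_inv1[OF h gqh] .
  from alpha_comp[OF gi h st x] ax gqg
  have c: "?x \<in> I (ginv (cmp (ginv g) h)) \<and> alpha (ginv g) (one g * q) = alpha (cmp (ginv g) h) ?x" by simp
  have "cmp (ginv g) h \<in> G" using cmp_in[OF gi h st] .
  then show ?thesis using c alpha_in by metis
qed

context
  fixes a :: 'a
  assumes ac: "central a"
begin

definition b where "b g = alpha g (a * one (ginv g))"
definition X where "X g = sing g (b g)"
definition Y where "Y g = sing (ginv g) (one (ginv g))"

lemma b_in: "g \<in> G \<Longrightarrow> b g \<in> I g"
  unfolding b_def using alpha_in I_one inv_in by blast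

lemma b_central: "g \<in> G \<Longrightarrow> b g * y = y * b g"
  unfolding b_def
proof (rule alpha_central)
  assume g: "g \<in> G"
  show "a * one (ginv g) \<in> I (ginv g)" using I_one inv_in g by blast
  fix y
  have a: "a * y = y * a" for y using ac unfolding central_def by blast
  show "a * one (ginv g) * y = y * (a * one (ginv g))"
    using a one_central[OF inv_in[OF g]] by (metis mult.assoc)
qed

lemma b_cov:
  assumes h: "h \<in> G" and g: "g \<in> G" and st: "src h = tgt g" and q: "q \<in> I h"
  shows "alpha h (alpha (ginv h) q * b g) = q * b (cmp h g)"
proof -
  have hi: "ginv h \<in> G" using inv_in h by blast
  let ?p = "alpha (ginv h) q"
  have p: "?p \<in> I (ginv h)" using alpha_in[OF hi] q inv_inv[OF h] by simp
  have "?p * b g = ?p * one (ginv h) * b g" using memI[OF hi] p by simp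
  also have "\<dots> = ?p * (b g * one (ginv h))" using one_central[OF hi] by (simp add: mult.assoc)
  finally have pb: "?p * b g = ?p * (b g * one (ginv h))" .
  have bh: "b g * one (ginv h) \<in> I (ginv h)" using I_one[OF hi] .
  have "alpha h (?p * b g) = alpha h ?p * alpha h (b g * one (ginv h))"
    using pb alpha_mult[OF h p bh] by simp
  also have "alpha h ?p = q" using alpha_inv1[OF h q] .
  also have "alpha h (b g * one (ginv h)) = b (cmp h g) * one h"
    unfolding b_def using cov[OF h g st] .
  also have "q * (b (cmp h g) * one h) = q * one h * b (cmp h g)"
    using one_central[OF h] by (simp add: mult.assoc)
  also have "\<dots> = q * b (cmp h g)" using memI[OF h] q by simp
  finally show ?thesis .
qed

lemma X_S: "g \<in> G \<Longrightarrow> X g \<in> S" unfolding X_def using S_sing b_in by blast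
lemma Y_S: "g \<in> G \<Longrightarrow> Y g \<in> S" unfolding Y_def using S_sing oneI inv_in by blast

lemma XY: assumes g: "g \<in> G" shows "mul (X g) (Y g) = sing (tgt g) (b g)"
proof -
  let ?f = "\<lambda>h. sing (cmp g h) (alpha g (alpha (ginv g) (b g) * Y g h))"
  have "mul (X g) (Y g) = (\<Sum>h\<in>{h\<in>G. tgt h = src g}. ?f h)" unfolding X_def by (rule mul_left_sing[OF g])
  also have "\<dots> = ?f (ginv g)"
  proof (rule sum_single)
    show "finite {h\<in>G. tgt h = src g}" using fin by simp
    show "ginv g \<in> {h\<in>G. tgt h = src g}" using inv_in g tgt_inv g by simp
    fix h assume "h \<in> {h\<in>G. tgt h = src g}" "h \<noteq> ginv g"
    then show "?f h = 0" by (simp add: Y_def sing_def alpha_zero g zero_fun_def)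
  qed
  also have "\<dots> = sing (tgt g) (b g)"
  proof -
    have bg: "b g \<in> I (ginv (ginv g))" using b_in[OF g] inv_inv[OF g] by simp
    have ab: "alpha (ginv g) (b g) \<in> I (ginv g)" using alpha_in[OF inv_in[OF g] bg] .
    then have "alpha (ginv g) (b g) * one (ginv g) = alpha (ginv g) (b g)" using memI inv_in g by blast
    then show ?thesis using alpha_inv1[OF g b_in[OF g]] inv_r[OF g] by (simp add: Y_def sing_def)
  qed
  finally show ?thesis .
qed

abbreviation T where "T \<equiv> tensor_rel S (range emb) (+) mul"

definition D where "D s g h = delta2 (sing g (s h * b g), sing (cmp (ginv g) h) (one (cmp (ginv g) h)))"

lemma stepA:
  assumes s: "s \<in> S" and g: "g \<in> G"
  shows "delta2 (mul s (X g), Y g) - (\<Sum>h\<in>{h\<in>G. src h = tgt g}. D s (cmp h g) h) \<in> T"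
proof -
  let ?H = "{h\<in>G. src h = tgt g}"
  have fH: "finite ?H" using fin by simp
  have "mul s (X g) = (\<Sum>h\<in>?H. sing (cmp h g) (alpha h (alpha (ginv h) (s h) * b g)))"
    unfolding X_def by (rule mul_right_sing[OF g])
  also have "\<dots> = (\<Sum>h\<in>?H. sing (cmp h g) (s h * b (cmp h g)))"
    by (rule sum.cong) (auto simp: b_cov g S_val[OF s])
  finally have m: "mul s (X g) = (\<Sum>h\<in>?H. sing (cmp h g) (s h * b (cmp h g)))" .
  have Dh: "D s (cmp h g) h = delta2 (sing (cmp h g) (s h * b (cmp h g)), Y g)" if "h \<in> ?H" for h
    using that inv_cmp_cancel[OF g, of h] unfolding D_def Y_def by simp
  have mem: "sing (cmp h g) (s h * b (cmp h g)) \<in> S" if "h \<in> ?H" for h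
  proof -
    have hg: "cmp h g \<in> G" using that cmp_in g by blast
    show ?thesis using S_sing[OF hg] I_multL[OF hg b_in[OF hg]] by blast
  qed
  have "delta2 (sum (\<lambda>h. sing (cmp h g) (s h * b (cmp h g))) ?H, Y g)
     - (\<Sum>h\<in>?H. delta2 (sing (cmp h g) (s h * b (cmp h g)), Y g)) \<in> T"
    by (rule split_left[OF S_zero S_add fH mem Y_S[OF g]]) (auto intro: S_add)
  moreover have "(\<Sum>h\<in>?H. D s (cmp h g) h) = (\<Sum>h\<in>?H. delta2 (sing (cmp h g) (s h * b (cmp h g)), Y g))"
    using Dh by (rule sum.cong[OF refl])
  ultimately show ?thesis using m by simp
qed

lemma stepB:
  assumes s: "s \<in> S" and g: "g \<in> G"
  shows "delta2 (X g, mul (Y g) s) - (\<Sum>h\<in>{h\<in>G. tgt h = tgt g}. D s g h) \<in> T"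
proof -
  let ?H = "{h\<in>G. tgt h = tgt g}"
  have fH: "finite ?H" using fin by simp
  have gi: "ginv g \<in> G" using inv_in g by blast
  let ?d = "\<lambda>h. alpha (ginv g) (one g * s h)"
  let ?l = "\<lambda>h. cmp (ginv g) h"
  have "mul (Y g) s = (\<Sum>h\<in>{h\<in>G. tgt h = src (ginv g)}.
           sing (cmp (ginv g) h) (alpha (ginv g) (alpha (ginv (ginv g)) (one (ginv g)) * s h)))"
    unfolding Y_def by (rule mul_left_sing[OF gi])
  also have "\<dots> = (\<Sum>h\<in>?H. sing (?l h) (?d h))"
    using src_inv[OF g] inv_inv[OF g] alpha_one[OF g] by simp
  finally have m: "mul (Y g) s = (\<Sum>h\<in>?H. sing (?l h) (?d h))" .
  have lG: "?l h \<in> G" if "h \<in> ?H" for h using that cmp_in[OF gi] src_inv[OF g] by auto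
  have dl: "?d h \<in> I (?l h)" if "h \<in> ?H" for h using that d_in[OF g] S_val[OF s] by auto
  have mem: "sing (?l h) (?d h) \<in> S" if "h \<in> ?H" for h using S_sing lG dl that by blast
  have A: "delta2 (X g, sum (\<lambda>h. sing (?l h) (?d h)) ?H) - (\<Sum>h\<in>?H. delta2 (X g, sing (?l h) (?d h))) \<in> T"
    by (rule split_right[OF S_zero S_add fH mem X_S[OF g]]) (auto intro: S_add)
  have B: "delta2 (X g, sing (?l h) (?d h)) - D s g h \<in> T" if h: "h \<in> ?H" for h
  proof -
    have e1: "mul (emb (?d h)) (sing (?l h) (one (?l h))) = sing (?l h) (?d h)"
      by (rule emb_sing[OF lG[OF h] dl[OF h]])
    have sh: "s h \<in> I h" using S_val[OF s] h by auto
    have gq: "one g * s h \<in> I g" using I_multR[OF g oneI[OF g]] .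
    have dg: "?d h \<in> I (ginv g)" using alpha_in[OF gi] gq inv_inv[OF g] by simp
    have bg: "b g \<in> I (ginv (ginv g))" using b_in[OF g] inv_inv[OF g] by simp
    have ab: "alpha (ginv g) (b g) \<in> I (ginv g)" using alpha_in[OF gi bg] .
    have "mul (X g) (emb (?d h)) = sing g (alpha g (alpha (ginv g) (b g) * ?d h))"
      unfolding X_def by (rule sing_emb[OF g dg])
    also have "alpha g (alpha (ginv g) (b g) * ?d h) = b g * (one g * s h)"
      using alpha_mult[OF g ab dg] alpha_inv1[OF g b_in[OF g]] alpha_inv1[OF g gq] by simp
    also have "b g * (one g * s h) = s h * b g"
      using memI[OF g] b_in[OF g] b_central[OF g] by (simp add: mult.assoc[symmetric])
    finally have e2: "mul (X g) (emb (?d h)) = sing g (s h * b g)" .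
    have Y'S: "sing (?l h) (one (?l h)) \<in> S" using S_sing[OF lG[OF h] oneI[OF lG[OF h]]] .
    have "delta2 (mul (X g) (emb (?d h)), sing (?l h) (one (?l h)))
       - delta2 (X g, mul (emb (?d h)) (sing (?l h) (one (?l h)))) \<in> T"
      by (rule tensor_rel.balanced[OF X_S[OF g] Y'S]) simp
    then have "D s g h - delta2 (X g, sing (?l h) (?d h)) \<in> T"
      unfolding D_def using e1 e2 by simp
    from Tneg[OF this] show ?thesis by simp
  qed
  have "(delta2 (X g, sum (\<lambda>h. sing (?l h) (?d h)) ?H) - (\<Sum>h\<in>?H. delta2 (X g, sing (?l h) (?d h))))
      + (\<Sum>h\<in>?H. delta2 (X g, sing (?l h) (?d h)) - D s g h) \<in> T"
    by (rule Tadd[OF A Tsum[OF fH B]])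
  moreover have "(delta2 (X g, sum (\<lambda>h. sing (?l h) (?d h)) ?H) - (\<Sum>h\<in>?H. delta2 (X g, sing (?l h) (?d h))))
      + (\<Sum>h\<in>?H. delta2 (X g, sing (?l h) (?d h)) - D s g h)
      = delta2 (X g, sum (\<lambda>h. sing (?l h) (?d h)) ?H) - (\<Sum>h\<in>?H. D s g h)"
    by (simp only: sum_subtractf) (simp only: grp_id2)
  ultimately show ?thesis using m by simp
qed

lemma stepC:
  "(\<Sum>g\<in>G. \<Sum>h\<in>{h\<in>G. src h = tgt g}. D s (cmp h g) h) = (\<Sum>g\<in>G. \<Sum>h\<in>{h\<in>G. tgt h = tgt g}. D s g h)"
proof -
  have "(\<Sum>g\<in>G. \<Sum>h\<in>{h\<in>G. src h = tgt g}. D s (cmp h g) h)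
      = (\<Sum>(g,h)\<in>(SIGMA g:G. {h\<in>G. src h = tgt g}). D s (cmp h g) h)"
    by (rule sum.Sigma) (use fin in auto)
  also have "\<dots> = (\<Sum>(g,h)\<in>(SIGMA g:G. {h\<in>G. tgt h = tgt g}). D s g h)"
  proof (rule sum.reindex_bij_witness[where i = "\<lambda>(g,h). (cmp (ginv h) g, h)" and j = "\<lambda>(g,h). (cmp h g, h)"])
    fix p assume "p \<in> (SIGMA g:G. {h\<in>G. src h = tgt g})"
    then obtain g h where p: "p = (g,h)" "g \<in> G" "h \<in> G" "src h = tgt g" by auto
    show "(case case p of (g, h) \<Rightarrow> (cmp h g, h) of (g, h) \<Rightarrow> (cmp (ginv h) g, h)) = p"
      using p cancel_l by auto
    show "(case p of (g, h) \<Rightarrow> (cmp h g, h)) \<in> (SIGMA g:G. {h\<in>G. tgt h = tgt g})"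
      using p cmp_in tgt_cmp by auto
    show "(case case p of (g, h) \<Rightarrow> (cmp h g, h) of (g, h) \<Rightarrow> D s g h) = (case p of (g, h) \<Rightarrow> D s (cmp h g) h)"
      using p by simp
  next
    fix p assume "p \<in> (SIGMA g:G. {h\<in>G. tgt h = tgt g})"
    then obtain g h where p: "p = (g,h)" "g \<in> G" "h \<in> G" "tgt h = tgt g" by auto
    have hi: "ginv h \<in> G" using inv_in p by blast
    have st: "src (ginv h) = tgt g" using src_inv p by simp
    show "(case case p of (g, h) \<Rightarrow> (cmp (ginv h) g, h) of (g, h) \<Rightarrow> (cmp h g, h)) = p"
      using p cancel_l[OF hi p(2) st] inv_inv[OF p(3)] by simp
    show "(case p of (g, h) \<Rightarrow> (cmp (ginv h) g, h)) \<in> (SIGMA g:G. {h\<in>G. src h = tgt g})"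
      using p cmp_in[OF hi p(2) st] tgt_cmp[OF hi p(2) st] tgt_inv[OF p(3)] by simp
  qed
  also have "\<dots> = (\<Sum>g\<in>G. \<Sum>h\<in>{h\<in>G. tgt h = tgt g}. D s g h)"
    by (rule sum.Sigma[symmetric]) (use fin in auto)
  finally show ?thesis .
qed

lemma main_tensor:
  assumes s: "s \<in> S"
  shows "(\<Sum>g\<in>G. delta2 (mul s (X g), Y g)) - (\<Sum>g\<in>G. delta2 (X g, mul (Y g) s)) \<in> T"
proof -
  let ?A = "\<lambda>g. \<Sum>h\<in>{h\<in>G. src h = tgt g}. D s (cmp h g) h"
  let ?B = "\<lambda>g. \<Sum>h\<in>{h\<in>G. tgt h = tgt g}. D s g h"
  have LA: "(\<Sum>g\<in>G. delta2 (mul s (X g), Y g) - ?A g) \<in> T"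
    by (rule Tsum[OF fin]) (rule stepA[OF s])
  have LB: "(\<Sum>g\<in>G. delta2 (X g, mul (Y g) s) - ?B g) \<in> T"
    by (rule Tsum[OF fin]) (rule stepB[OF s])
  have "(\<Sum>g\<in>G. delta2 (mul s (X g), Y g) - ?A g) - (\<Sum>g\<in>G. delta2 (X g, mul (Y g) s) - ?B g) \<in> T"
    by (rule tensor_rel.diff[OF LA LB])
  moreover have "(\<Sum>g\<in>G. delta2 (mul s (X g), Y g) - ?A g) - (\<Sum>g\<in>G. delta2 (X g, mul (Y g) s) - ?B g)
     = (\<Sum>g\<in>G. delta2 (mul s (X g), Y g)) - (\<Sum>g\<in>G. delta2 (X g, mul (Y g) s))"
    by (simp only: sum_subtractf stepC grp_id4)
  ultimately show ?thesis by simp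
qed

lemma mult_one:
  assumes k: "k \<in> G0" and tk: "trace_j G G0 src tgt ginv one alpha k a = one k"
    and gj: "\<forall>j\<in>G0. \<exists>g\<in>hom_set G src tgt k j. one g = one j"
  shows "(\<Sum>g\<in>G. mul (X g) (Y g)) = skew_one G0 one"
proof (rule ext)
  fix e
  have "(\<Sum>g\<in>G. mul (X g) (Y g)) e = (\<Sum>g\<in>G. if tgt g = e then b g else 0)"
    unfolding sum_fun_apply by (rule sum.cong) (auto simp: XY sing_def)
  also have "\<dots> = (\<Sum>g\<in>{g\<in>G. tgt g = e}. b g)"
    by (simp only: sum.inter_filter[OF fin])
  also have "\<dots> = skew_one G0 one e"
  proof (cases "e \<in> G0")
    case True
    then obtain g where g: "g \<in> G" "src g = k" "tgt g = e" "one g = one e"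
      using gj unfolding hom_set_def by blast
    have "(\<Sum>l\<in>{l\<in>G. tgt l = tgt g}. alpha l (a * one (ginv l))) = one (tgt g)"
      using trace_all[OF k tk g(1,2)] g by simp
    then show ?thesis using True g unfolding b_def skew_one_def by simp
  next
    case False
    then have E: "{g\<in>G. tgt g = e} = {}" using tgt_in by auto
    show ?thesis unfolding skew_one_def E using False by simp
  qed
  finally show "(\<Sum>g\<in>G. mul (X g) (Y g)) e = skew_one G0 one e" .
qed

lemma separable:
  assumes k: "k \<in> G0" and tk: "trace_j G G0 src tgt ginv one alpha k a = one k"
    and gj: "\<forall>j\<in>G0. \<exists>g\<in>hom_set G src tgt k j. one g = one j"
  shows "separable_extension S skew_add mul skew_zero (skew_one G0 one) (range emb)"
proof -
  obtain L where L: "distinct L" "set L = G" using finite_distinct_list[OF fin] by blast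
  let ?xs = "map (\<lambda>g. (X g, Y g)) L"
  have "set ?xs \<subseteq> S \<times> S" using L X_S Y_S by auto
  moreover have "tensor_mult_map skew_add mul skew_zero ?xs = skew_one G0 one"
  proof -
    have "tensor_mult_map skew_add mul skew_zero ?xs = sum_list (map (\<lambda>g. mul (X g) (Y g)) L)"
      unfolding tensor_mult_map_eq by (simp add: o_def)
    also have "\<dots> = (\<Sum>g\<in>G. mul (X g) (Y g))" using sum_list_distinct_conv_sum_set[OF L(1)] L(2) by simp
    finally show ?thesis using mult_one[OF k tk gj] by simp
  qed
  moreover have "tensor_eq S (range emb) skew_add mul
                  (map (\<lambda>p. (mul s (fst p), snd p)) ?xs)
                  (map (\<lambda>p. (fst p, mul (snd p) s)) ?xs)" if s: "s \<in> S" for s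
  proof -
    have e1: "formal_sum (map (\<lambda>p. (mul s (fst p), snd p)) ?xs) = (\<Sum>g\<in>G. delta2 (mul s (X g), Y g))"
      unfolding formal_sum_eq using sum_list_distinct_conv_sum_set[OF L(1)] L(2) by (simp add: o_def)
    have e2: "formal_sum (map (\<lambda>p. (fst p, mul (snd p) s)) ?xs) = (\<Sum>g\<in>G. delta2 (X g, mul (Y g) s))"
      unfolding formal_sum_eq using sum_list_distinct_conv_sum_set[OF L(1)] L(2) by (simp add: o_def)
    show ?thesis unfolding tensor_eq_def skew_add_eq e1 e2 by (rule main_tensor[OF s])
  qed
  ultimately show ?thesis unfolding separable_extension_def by blast
qed

end
end

theorem corollary3p5:
  fixes G G0 :: "'g set"
    and src tgt ginv :: "'g \<Rightarrow> 'g"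
    and cmp :: "'g \<Rightarrow> 'g \<Rightarrow> 'g"
    and one :: "'g \<Rightarrow> 'a::ring_1"
    and alpha :: "'g \<Rightarrow> 'a \<Rightarrow> 'a"
  assumes grp: "groupoid G G0 src tgt cmp ginv"
    and fin: "finite G"
    and conn: "connected_groupoid G G0 src tgt"
    and dsum: "direct_sum_decomp G0 one"
    and act: "unital_partial_action G G0 src tgt cmp ginv one alpha"
    and hyp: "\<exists>a k. central a \<and> k \<in> G0 \<and> trace_j G G0 src tgt ginv one alpha k a = one k \<and>
                  (\<forall>j\<in>G0. \<exists>g\<in>hom_set G src tgt k j. one g = one j)"
  shows "separable_extension (skew_carrier G one) skew_add (skew_mult G src tgt cmp ginv alpha)
           skew_zero (skew_one G0 one) (range (skew_embed G0 one))"
proof -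
  interpret PA G G0 src tgt ginv cmp one alpha
    using grp act fin by unfold_locales
  from hyp obtain a k where ac: "central a" and k: "k \<in> G0"
    and tk: "trace_j G G0 src tgt ginv one alpha k a = one k"
    and gj: "\<forall>j\<in>G0. \<exists>g\<in>hom_set G src tgt k j. one g = one j" by blast
  show ?thesis by (rule separable[OF ac k tk gj])
qed

end
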